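(* Suppose Assumption A holds with $\beta,\gamma\in(0,\infty)$. Fix $\mu>0$ and $\sigma\in\mathcal X$, let $\pi^{\mu,\sigma}$ be a perturbed equilibrium, and let $0<\eta\le\frac{2\mu\gamma\rho^2}{\mu^2\gamma\rho^2(\gamma+2\beta)+8L^2}$. Let $(\pi^t)_{t\ge0}$ be any sequence in $\mathcal X$ such that for all $t\ge0$, $$D_\psi(\pi^{\mu,\sigma},\pi^{t+1})-D_\psi(\pi^{\mu,\sigma},\pi^t)+D_\psi(\pi^{t+1},\pi^t)\le\eta\sum_{i=1}^N\langle\nabla_{\pi_i}v_i(\pi^t)-\mu\nabla_{\pi_i}G(\pi_i^t,\sigma_i),\pi_i^{t+1}-\pi_i^{\mu,\sigma}\rangle.$$ Then for all $t\ge0$, $$D_\psi(\pi^{\mu,\sigma},\pi^t)\le D_\psi(\pi^{\mu,\sigma},\pi^0)\Big(1-\frac{\eta\mu\gamma}2\Big)^t.$$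
   Context: Game. Let $N\ge1$. For each $i\in[N]$, $\mathcal X_i\subseteq\mathbb R^{d_i}$ is a nonempty compact convex set, and $\mathcal X=\prod_i\mathcal X_i$. Each $v_i:\mathcal X\to\mathbb R$ is differentiable, with block gradient $\nabla_{\pi_i}v_i$. The norm is Euclidean, with $\|\pi\|^2=\sum_i\|\pi_i\|^2$. The game is monotone: $\sum_i\langle\nabla_{\pi_i}v_i(\pi)-\nabla_{\pi_i}v_i(\pi'),\pi_i-\pi_i'\rangle\le0$. The game is $L$-smooth: $\sum_i\|\nabla_{\pi_i}v_i(\pi)-\nabla_{\pi_i}v_i(\pi')\|^2\le L^2\|\pi-\pi'\|^2$. Regularizer. $\psi:\mathcal X_i\to\mathbb R$ is differentiable and $\rho$-strongly convex with respect to $\|\cdot\|$. Bregman divergence: $D_\psi(x,y)=\psi(x)-\psi(y)-\langle\nabla\psi(y),x-y\rangle$, and $D_\psi(\pi,\pi')=\sum_iD_\psi(\pi_i,\pi_i')$. Perturbation. $G:\mathcal X_i\times\mathcal X_i\to[0,\infty)$ is differentiable in its first argument, with gradient $\nabla_{\pi_i}G$ in that argument. $G(\cdot,\sigma_i)$ is strictly convex with minimum $0$ at $\sigma_i$. For $\mu>0$ and $\sigma\in\mathcal X$, $\pi^{\mu,\sigma}$ is a profile with $\pi_i^{\mu,\sigma}\in\arg\max_{\pi_i}\{v_i(\pi_i,\pi^{\mu,\sigma}_{-i})-\mu G(\pi_i,\sigma_i)\}$ for all $i$. Assumption A: for all $\sigma_i,\pi_i,\pi_i'\in\mathcal X_i$,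 $$\gamma D_\psi(\pi_i',\pi_i)\le G(\pi_i',\sigma_i)-G(\pi_i,\sigma_i)-\langle\nabla_{\pi_i}G(\pi_i,\sigma_i),\pi_i'-\pi_i\rangle\le\beta D_\psi(\pi_i',\pi_i).$$ *)

theory Defs
  imports "HOL-Analysis.Analysis"
begin

definition strongly_convex_on :: "real \<Rightarrow> 'a::real_normed_vector set \<Rightarrow> ('a \<Rightarrow> real) \<Rightarrow> bool" where
  "strongly_convex_on \<rho> S f \<longleftrightarrow>
     (\<forall>x\<in>S. \<forall>y\<in>S. \<forall>t::real. 0 \<le> t \<and> t \<le> 1 \<longrightarrow>
        f ((1 - t) *\<^sub>R x + t *\<^sub>R y)
          \<le> (1 - t) * f x + t * f y - \<rho> / 2 * t * (1 - t) * (norm (x - y))\<^sup>2)"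

definition strict_convex_on :: "'a::real_vector set \<Rightarrow> ('a \<Rightarrow> real) \<Rightarrow> bool" where
  "strict_convex_on S f \<longleftrightarrow>
     (\<forall>x\<in>S. \<forall>y\<in>S. x \<noteq> y \<longrightarrow> (\<forall>t::real. 0 < t \<and> t < 1 \<longrightarrow>
        f ((1 - t) *\<^sub>R x + t *\<^sub>R y) < (1 - t) * f x + t * f y))"

definition bregman :: "('a::real_inner \<Rightarrow> real) \<Rightarrow> ('a \<Rightarrow> 'a) \<Rightarrow> 'a \<Rightarrow> 'a \<Rightarrow> real" where
  "bregman psi dpsi x y = psi x - psi y - inner (dpsi y) (x - y)"

definition bregman_prof :: "('a::real_inner \<Rightarrow> real) \<Rightarrow> ('a \<Rightarrow> 'a) \<Rightarrow> nat \<Rightarrow> (nat \<Rightarrow> 'a) \<Rightarrow> (nat \<Rightarrow> 'a) \<Rightarrow> real" where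
  "bregman_prof psi dpsi N p q = (\<Sum>i<N. bregman psi dpsi (p i) (q i))"

end

theory Submission imports Defs begin

lemma dir_limit:
  fixes f :: "'a::real_normed_vector \<Rightarrow> real"
  assumes df: "(f has_derivative f') (at y within S)" and cS: "convex S" and xS: "x \<in> S" and yS: "y \<in> S"
  shows "((\<lambda>t. (f (y + t *\<^sub>R (x - y)) - f y) / t) \<longlongrightarrow> f' (x - y)) (at_right 0)"
proof -
  let ?g = "\<lambda>t::real. y + t *\<^sub>R (x - y)"
  have dg: "(?g has_derivative (\<lambda>t. t *\<^sub>R (x - y))) (at 0 within {0..1})"
    by (auto intro!: derivative_eq_intros)
  have sub: "?g ` {0..1} \<subseteq> S"
  proof
    fix z assume "z \<in> ?g ` {0..1}"
    then obtain t where t: "t \<in> {0..1}" "z = ?g t" by auto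
    have "z = (1 - t) *\<^sub>R y + t *\<^sub>R x" using t by (simp add: algebra_simps)
    then show "z \<in> S" using t cS xS yS by (auto intro: convexD)
  qed
  have df2: "(f has_derivative f') (at (?g 0) within (?g ` {0..1}))"
    using has_derivative_subset[OF df sub] by simp
  have lin: "linear f'" using df by (rule has_derivative_linear)
  have "((f \<circ> ?g) has_derivative (f' \<circ> (\<lambda>t. t *\<^sub>R (x - y)))) (at 0 within {0..1})"
    by (rule diff_chain_within[OF dg df2])
  moreover have "(f' \<circ> (\<lambda>t. t *\<^sub>R (x - y))) = (*) (f' (x - y))"
    using linear_scale[OF lin] by (auto simp: fun_eq_iff)
  ultimately have "((f \<circ> ?g) has_field_derivative f' (x - y)) (at 0 within {0..1})"
    unfolding has_field_derivative_def by metis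
  then have "((\<lambda>t. ((f \<circ> ?g) t - (f \<circ> ?g) 0) / (t - 0)) \<longlongrightarrow> f' (x - y)) (at 0 within {0..1})"
    by (simp add: has_field_derivative_iff)
  then show ?thesis by (simp add: at_within_Icc_at_right)
qed

lemma breg_lb:
  fixes psi :: "'a::real_inner \<Rightarrow> real"
  assumes sc: "strongly_convex_on \<rho> S psi" and d: "(psi has_derivative (\<lambda>h. inner (dpsi y) h)) (at y within S)"
    and cS: "convex S" and xS: "x \<in> S" and yS: "y \<in> S"
  shows "\<rho> / 2 * (norm (x - y))\<^sup>2 \<le> bregman psi dpsi x y"
proof -
  have lim1: "((\<lambda>t. (psi (y + t *\<^sub>R (x - y)) - psi y) / t) \<longlongrightarrow> inner (dpsi y) (x - y)) (at_right 0)"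
    using dir_limit[OF d cS xS yS] by simp
  have lim2: "((\<lambda>t. psi x - psi y - \<rho> / 2 * (1 - t) * (norm (x - y))\<^sup>2) \<longlongrightarrow>
        psi x - psi y - \<rho> / 2 * (1 - 0) * (norm (x - y))\<^sup>2) (at_right 0)"
    by (intro tendsto_intros)
  have ev: "eventually (\<lambda>t. (psi (y + t *\<^sub>R (x - y)) - psi y) / t \<le> psi x - psi y - \<rho> / 2 * (1 - t) * (norm (x - y))\<^sup>2) (at_right (0::real))"
    unfolding eventually_at_right_field
  proof (intro exI[of _ 1] conjI allI impI)
    fix t :: real assume t0: "0 < t" and t1: "t < 1"
    note t = t0 t1
    have "psi ((1 - t) *\<^sub>R y + t *\<^sub>R x) \<le> (1 - t) * psi y + t * psi x - \<rho> / 2 * t * (1 - t) * (norm (y - x))\<^sup>2"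
      using sc xS yS t unfolding strongly_convex_on_def by auto
    moreover have "(1 - t) *\<^sub>R y + t *\<^sub>R x = y + t *\<^sub>R (x - y)" by (simp add: algebra_simps)
    moreover have "norm (y - x) = norm (x - y)" by (rule norm_minus_commute)
    ultimately have "psi (y + t *\<^sub>R (x - y)) - psi y \<le> t * (psi x - psi y - \<rho> / 2 * (1 - t) * (norm (x - y))\<^sup>2)"
      by (simp add: algebra_simps)
    then show "(psi (y + t *\<^sub>R (x - y)) - psi y) / t \<le> psi x - psi y - \<rho> / 2 * (1 - t) * (norm (x - y))\<^sup>2"
      using t by (simp add: divide_le_eq mult.commute)
  qed simp
  have "inner (dpsi y) (x - y) \<le> psi x - psi y - \<rho> / 2 * (1 - 0) * (norm (x - y))\<^sup>2"
    by (rule tendsto_le[OF trivial_limit_at_right_real lim2 lim1 ev])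
  then show ?thesis unfolding bregman_def by simp
qed

lemma foc_lemma:
  fixes f :: "'a::real_normed_vector \<Rightarrow> real"
  assumes df: "(f has_derivative f') (at y within S)" and cS: "convex S" and xS: "x \<in> S" and yS: "y \<in> S"
    and mx: "\<And>z. z \<in> S \<Longrightarrow> f z \<le> f y"
  shows "f' (x - y) \<le> 0"
proof -
  have ev: "eventually (\<lambda>t. (f (y + t *\<^sub>R (x - y)) - f y) / t \<le> 0) (at_right (0::real))"
    unfolding eventually_at_right_field
  proof (intro exI[of _ 1] conjI allI impI)
    fix t :: real assume t0: "0 < t" and t1: "t < 1"
    note t = t0 t1
    have "(1 - t) *\<^sub>R y + t *\<^sub>R x \<in> S" using t cS xS yS by (auto intro: convexD)
    moreover have "(1 - t) *\<^sub>R y + t *\<^sub>R x = y + t *\<^sub>R (x - y)" by (simp add: algebra_simps)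
    ultimately have "f (y + t *\<^sub>R (x - y)) \<le> f y" using mx by metis
    then show "(f (y + t *\<^sub>R (x - y)) - f y) / t \<le> 0" using t by (simp add: divide_le_0_iff)
  qed simp
  show ?thesis by (rule tendsto_le[OF trivial_limit_at_right_real tendsto_const dir_limit[OF df cS xS yS] ev])
qed

lemma young:
  fixes a b :: "'a::real_inner"
  assumes c: "c > 0"
  shows "inner a b \<le> c / 2 * (norm a)\<^sup>2 + 1 / (2 * c) * (norm b)\<^sup>2"
proof -
  have "0 \<le> (norm (c *\<^sub>R a - b))\<^sup>2" by simp
  also have "\<dots> = c\<^sup>2 * (norm a)\<^sup>2 - 2 * c * inner a b + (norm b)\<^sup>2"
    unfolding power2_norm_eq_inner by (simp add: inner_diff_left inner_diff_right power2_eq_square inner_commute algebra_simps)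
  finally have "2 * c * inner a b \<le> c\<^sup>2 * (norm a)\<^sup>2 + (norm b)\<^sup>2" by simp
  then have "inner a b \<le> (c\<^sup>2 * (norm a)\<^sup>2 + (norm b)\<^sup>2) / (2 * c)" using c by (simp add: le_divide_eq mult.commute)
  also have "\<dots> = c / 2 * (norm a)\<^sup>2 + 1 / (2 * c) * (norm b)\<^sup>2" using c by (simp add: field_simps power2_eq_square)
  finally show ?thesis .
qed

lemma key_i:
  fixes gp gs dp ds p q s :: "'a::real_inner"
  assumes A1: "\<gamma> * Bsp \<le> Gs - Gp - inner dp (s - p)"
    and A2: "\<gamma> * Bqs \<le> Gq - Gs - inner ds (q - s)"
    and A3: "Gq - Gp - inner dp (q - p) \<le> \<beta> * Bqp"
    and nn: "0 \<le> \<gamma> * Bqs" and c: "c > 0" and mu: "\<mu> > 0"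
  shows "inner (gp - \<mu> *\<^sub>R dp) (q - s) \<le> inner (gp - gs) (p - s)
     + (c / 2 * (norm (gp - gs))\<^sup>2 + 1 / (2 * c) * (norm (q - p))\<^sup>2)
     - \<mu> * \<gamma> * Bsp + \<mu> * \<beta> * Bqp + inner (gs - \<mu> *\<^sub>R ds) (q - s)"
proof -
  have id: "inner (gp - \<mu> *\<^sub>R dp) (q - s) = inner (gp - gs) (p - s) + inner (gp - gs) (q - p)
       - \<mu> * (inner dp (q - s) - inner ds (q - s)) + inner (gs - \<mu> *\<^sub>R ds) (q - s)"
    by (simp add: inner_diff_left inner_diff_right algebra_simps)
  have id2: "inner dp (q - s) - inner ds (q - s) = (Gs - Gp - inner dp (s - p)) + (Gq - Gs - inner ds (q - s)) - (Gq - Gp - inner dp (q - p))"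
    by (simp add: inner_diff_left inner_diff_right algebra_simps)
  have "\<gamma> * Bsp - \<beta> * Bqp \<le> inner dp (q - s) - inner ds (q - s)"
    using id2 A1 A2 A3 nn by linarith
  then have "\<mu> * (\<gamma> * Bsp - \<beta> * Bqp) \<le> \<mu> * (inner dp (q - s) - inner ds (q - s))"
    using mu by (simp add: mult_left_mono)
  moreover have "inner (gp - gs) (q - p) \<le> c / 2 * (norm (gp - gs))\<^sup>2 + 1 / (2 * c) * (norm (q - p))\<^sup>2"
    by (rule young[OF c])
  ultimately show ?thesis using id by (simp add: algebra_simps)
qed


theorem lemma2:
  fixes N :: nat
    and X :: "nat \<Rightarrow> 'a::euclidean_space set"
    and v :: "nat \<Rightarrow> (nat \<Rightarrow> 'a) \<Rightarrow> real"
    and gv :: "nat \<Rightarrow> (nat \<Rightarrow> 'a) \<Rightarrow> 'a"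
    and L \<rho> \<gamma> \<beta> \<mu> \<eta> :: real
    and psi :: "'a \<Rightarrow> real" and dpsi :: "'a \<Rightarrow> 'a"
    and G :: "'a \<Rightarrow> 'a \<Rightarrow> real" and dG :: "'a \<Rightarrow> 'a \<Rightarrow> 'a"
    and \<sigma> \<pi>s :: "nat \<Rightarrow> 'a"
    and \<pi> :: "nat \<Rightarrow> nat \<Rightarrow> 'a"
  assumes N: "N \<ge> 1"
    and X_ne: "\<And>i. i < N \<Longrightarrow> X i \<noteq> {}"
    and X_compact: "\<And>i. i < N \<Longrightarrow> compact (X i)"
    and X_convex: "\<And>i. i < N \<Longrightarrow> convex (X i)"
    \<comment> \<open>gv i p is the block gradient of v i with respect to the i-th block, at profiles p in X\<close>
    and v_grad: "\<And>i p. i < N \<Longrightarrow> p \<in> Pi\<^sub>E {..<N} X \<Longrightarrow>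
        ((\<lambda>x. v i (p(i := x))) has_derivative (\<lambda>h. inner (gv i p) h)) (at (p i) within X i)"
    and monotone: "\<And>p q. p \<in> Pi\<^sub>E {..<N} X \<Longrightarrow> q \<in> Pi\<^sub>E {..<N} X \<Longrightarrow>
        (\<Sum>i<N. inner (gv i p - gv i q) (p i - q i)) \<le> 0"
    and smooth: "\<And>p q. p \<in> Pi\<^sub>E {..<N} X \<Longrightarrow> q \<in> Pi\<^sub>E {..<N} X \<Longrightarrow>
        (\<Sum>i<N. (norm (gv i p - gv i q))\<^sup>2) \<le> L\<^sup>2 * (\<Sum>i<N. (norm (p i - q i))\<^sup>2)"
    and rho_pos: "\<rho> > 0"
    and psi_grad: "\<And>i x. i < N \<Longrightarrow> x \<in> X i \<Longrightarrow>
        (psi has_derivative (\<lambda>h. inner (dpsi x) h)) (at x within X i)"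
    and psi_sc: "\<And>i. i < N \<Longrightarrow> strongly_convex_on \<rho> (X i) psi"
    and G_nonneg: "\<And>i x s. i < N \<Longrightarrow> x \<in> X i \<Longrightarrow> s \<in> X i \<Longrightarrow> G x s \<ge> 0"
    and G_grad: "\<And>i x s. i < N \<Longrightarrow> x \<in> X i \<Longrightarrow> s \<in> X i \<Longrightarrow>
        ((\<lambda>y. G y s) has_derivative (\<lambda>h. inner (dG x s) h)) (at x within X i)"
    and G_strict: "\<And>i s. i < N \<Longrightarrow> s \<in> X i \<Longrightarrow> strict_convex_on (X i) (\<lambda>y. G y s)"
    and G_zero: "\<And>i s. i < N \<Longrightarrow> s \<in> X i \<Longrightarrow> G s s = 0"
    \<comment> \<open>Assumption A\<close>
    and beta_pos: "\<beta> > 0" and gamma_pos: "\<gamma> > 0"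
    and assmA: "\<And>i s x x'. i < N \<Longrightarrow> s \<in> X i \<Longrightarrow> x \<in> X i \<Longrightarrow> x' \<in> X i \<Longrightarrow>
        \<gamma> * bregman psi dpsi x' x \<le> G x' s - G x s - inner (dG x s) (x' - x)
        \<and> G x' s - G x s - inner (dG x s) (x' - x) \<le> \<beta> * bregman psi dpsi x' x"
    \<comment> \<open>perturbed equilibrium\<close>
    and mu_pos: "\<mu> > 0"
    and sigma: "\<sigma> \<in> Pi\<^sub>E {..<N} X"
    and pis: "\<pi>s \<in> Pi\<^sub>E {..<N} X"
    and pis_eq: "\<And>i x. i < N \<Longrightarrow> x \<in> X i \<Longrightarrow>
        v i (\<pi>s(i := x)) - \<mu> * G x (\<sigma> i) \<le> v i \<pi>s - \<mu> * G (\<pi>s i) (\<sigma> i)"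
    \<comment> \<open>step size\<close>
    and eta_pos: "\<eta> > 0"
    and eta_le: "\<eta> \<le> 2 * \<mu> * \<gamma> * \<rho>\<^sup>2 / (\<mu>\<^sup>2 * \<gamma> * \<rho>\<^sup>2 * (\<gamma> + 2 * \<beta>) + 8 * L\<^sup>2)"
    \<comment> \<open>the sequence\<close>
    and seq: "\<And>t. \<pi> t \<in> Pi\<^sub>E {..<N} X"
    and step: "\<And>t. bregman_prof psi dpsi N \<pi>s (\<pi> (Suc t)) - bregman_prof psi dpsi N \<pi>s (\<pi> t)
                   + bregman_prof psi dpsi N (\<pi> (Suc t)) (\<pi> t)
               \<le> \<eta> * (\<Sum>i<N. inner (gv i (\<pi> t) - \<mu> *\<^sub>R dG (\<pi> t i) (\<sigma> i)) (\<pi> (Suc t) i - \<pi>s i))"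
  shows "\<forall>t. bregman_prof psi dpsi N \<pi>s (\<pi> t)
           \<le> bregman_prof psi dpsi N \<pi>s (\<pi> 0) * (1 - \<eta> * \<mu> * \<gamma> / 2) ^ t"

proof -
  let ?B = "bregman psi dpsi"
  let ?Bp = "bregman_prof psi dpsi N"
  define r where "r = 1 - \<eta> * \<mu> * \<gamma> / 2"
  have mem: "\<And>t i. i < N \<Longrightarrow> \<pi> t i \<in> X i" using seq by (auto simp: PiE_iff)
  have smem: "\<And>i. i < N \<Longrightarrow> \<pi>s i \<in> X i" using pis by (auto simp: PiE_iff)
  have sgm: "\<And>i. i < N \<Longrightarrow> \<sigma> i \<in> X i" using sigma by (auto simp: PiE_iff)
  have blb: "\<And>i x y. i < N \<Longrightarrow> x \<in> X i \<Longrightarrow> y \<in> X i \<Longrightarrow> \<rho> / 2 * (norm (x - y))\<^sup>2 \<le> ?B x y"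
    using breg_lb psi_sc psi_grad X_convex by blast
  have bnn: "\<And>i x y. i < N \<Longrightarrow> x \<in> X i \<Longrightarrow> y \<in> X i \<Longrightarrow> 0 \<le> ?B x y"
  proof -
    fix i x y assume "i < N" "x \<in> X i" "y \<in> X i"
    then have "\<rho> / 2 * (norm (x - y))\<^sup>2 \<le> ?B x y" by (rule blb)
    moreover have "0 \<le> \<rho> / 2 * (norm (x - y))\<^sup>2" using rho_pos by simp
    ultimately show "0 \<le> ?B x y" by linarith
  qed
  have foc: "\<And>i x. i < N \<Longrightarrow> x \<in> X i \<Longrightarrow> inner (gv i \<pi>s - \<mu> *\<^sub>R dG (\<pi>s i) (\<sigma> i)) (x - \<pi>s i) \<le> 0"
  proof -
    fix i x assume i: "i < N" and x: "x \<in> X i"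
    have d: "((\<lambda>z. v i (\<pi>s(i := z)) - \<mu> * G z (\<sigma> i)) has_derivative
        (\<lambda>h. inner (gv i \<pi>s) h - \<mu> * inner (dG (\<pi>s i) (\<sigma> i)) h)) (at (\<pi>s i) within X i)"
      using v_grad[OF i pis] G_grad[OF i smem[OF i] sgm[OF i]]
      by (auto intro!: derivative_eq_intros)
    have "inner (gv i \<pi>s) (x - \<pi>s i) - \<mu> * inner (dG (\<pi>s i) (\<sigma> i)) (x - \<pi>s i) \<le> 0"
      using foc_lemma[OF d X_convex[OF i] x smem[OF i]] pis_eq[OF i] by simp
    then show "inner (gv i \<pi>s - \<mu> *\<^sub>R dG (\<pi>s i) (\<sigma> i)) (x - \<pi>s i) \<le> 0"
      by (simp add: inner_diff_left)
  qed
  define Q where "Q = \<mu>\<^sup>2 * \<gamma>\<^sup>2 * \<rho>\<^sup>2 + 8 * L\<^sup>2"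
  have Qpos: "Q > 0" unfolding Q_def using mu_pos gamma_pos rho_pos
    by (simp add: add_pos_nonneg)
  define c where "c = 2 * \<mu> * \<gamma> * \<rho> / Q"
  have cpos: "c > 0" unfolding c_def using Qpos mu_pos gamma_pos rho_pos by simp
  have cK: "c * L\<^sup>2 / \<rho> \<le> \<mu> * \<gamma> / 2"
  proof -
    have "c * L\<^sup>2 / \<rho> = 2 * \<mu> * \<gamma> * L\<^sup>2 / Q" unfolding c_def using rho_pos by simp
    also have "\<dots> \<le> \<mu> * \<gamma> / 2"
      using Qpos mu_pos gamma_pos rho_pos
      by (simp add: divide_le_eq Q_def algebra_simps)
    finally show ?thesis .
  qed
  define den where "den = \<mu>\<^sup>2 * \<gamma> * \<rho>\<^sup>2 * (\<gamma> + 2 * \<beta>) + 8 * L\<^sup>2"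
  have denpos: "den > 0" unfolding den_def using mu_pos gamma_pos rho_pos beta_pos
    by (simp add: add_pos_nonneg)
  have cM: "\<eta> * (1 / (c * \<rho>) + \<mu> * \<beta>) \<le> 1"
  proof -
    have "1 / (c * \<rho>) + \<mu> * \<beta> = den / (2 * \<mu> * \<gamma> * \<rho>\<^sup>2)"
      unfolding c_def den_def Q_def using mu_pos gamma_pos rho_pos
      by (simp add: field_simps power2_eq_square)
    moreover have "\<eta> * den \<le> 2 * \<mu> * \<gamma> * \<rho>\<^sup>2" using eta_le denpos unfolding den_def
      by (simp add: le_divide_eq mult.commute)
    ultimately show ?thesis using mu_pos gamma_pos rho_pos
      by (simp add: pos_divide_le_eq)
  qed
  have rnn: "r \<ge> 0"
  proof -
    have "\<eta> * den \<le> 2 * \<mu> * \<gamma> * \<rho>\<^sup>2" using eta_le denpos unfolding den_def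
      by (simp add: le_divide_eq mult.commute)
    then have "\<eta> * den * (\<mu> * \<gamma>) \<le> 2 * \<mu> * \<gamma> * \<rho>\<^sup>2 * (\<mu> * \<gamma>)"
      using mu_pos gamma_pos by (simp add: mult_right_mono)
    moreover have "2 * \<mu> * \<gamma> * \<rho>\<^sup>2 * (\<mu> * \<gamma>) \<le> 2 * den"
      unfolding den_def using mu_pos gamma_pos rho_pos beta_pos
      by (simp add: algebra_simps power2_eq_square)
    ultimately have "\<eta> * \<mu> * \<gamma> * den \<le> 2 * den" by (simp add: algebra_simps)
    then have "\<eta> * \<mu> * \<gamma> \<le> 2" using denpos by simp
    then show ?thesis unfolding r_def by simp
  qed
  have onestep: "?Bp \<pi>s (\<pi> (Suc t)) \<le> r * ?Bp \<pi>s (\<pi> t)" for t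
  proof -
    let ?p = "\<pi> t" and ?q = "\<pi> (Suc t)"
    let ?D = "?Bp \<pi>s ?p" and ?D' = "?Bp \<pi>s ?q" and ?E = "?Bp ?q ?p"
    let ?S = "\<Sum>i<N. inner (gv i ?p - \<mu> *\<^sub>R dG (?p i) (\<sigma> i)) (?q i - \<pi>s i)"
    let ?M0 = "\<Sum>i<N. inner (gv i ?p - gv i \<pi>s) (?p i - \<pi>s i)"
    let ?Gg = "\<Sum>i<N. (norm (gv i ?p - gv i \<pi>s))\<^sup>2"
    let ?Qp = "\<Sum>i<N. (norm (?q i - ?p i))\<^sup>2"
    let ?P = "\<Sum>i<N. (norm (?p i - \<pi>s i))\<^sup>2"
    let ?F0 = "\<Sum>i<N. inner (gv i \<pi>s - \<mu> *\<^sub>R dG (\<pi>s i) (\<sigma> i)) (?q i - \<pi>s i)"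
    have per: "inner (gv i ?p - \<mu> *\<^sub>R dG (?p i) (\<sigma> i)) (?q i - \<pi>s i) \<le>
        inner (gv i ?p - gv i \<pi>s) (?p i - \<pi>s i)
        + (c / 2 * (norm (gv i ?p - gv i \<pi>s))\<^sup>2 + 1 / (2 * c) * (norm (?q i - ?p i))\<^sup>2)
        - \<mu> * \<gamma> * ?B (\<pi>s i) (?p i) + \<mu> * \<beta> * ?B (?q i) (?p i)
        + inner (gv i \<pi>s - \<mu> *\<^sub>R dG (\<pi>s i) (\<sigma> i)) (?q i - \<pi>s i)" if i: "i < N" for i
    proof (rule key_i[OF _ _ _ _ cpos mu_pos])
      show "\<gamma> * ?B (\<pi>s i) (?p i) \<le> G (\<pi>s i) (\<sigma> i) - G (?p i) (\<sigma> i) - inner (dG (?p i) (\<sigma> i)) (\<pi>s i - ?p i)"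
        using assmA[OF i sgm[OF i] mem[OF i] smem[OF i]] by simp
      show "\<gamma> * ?B (?q i) (\<pi>s i) \<le> G (?q i) (\<sigma> i) - G (\<pi>s i) (\<sigma> i) - inner (dG (\<pi>s i) (\<sigma> i)) (?q i - \<pi>s i)"
        using assmA[OF i sgm[OF i] smem[OF i] mem[OF i]] by simp
      show "G (?q i) (\<sigma> i) - G (?p i) (\<sigma> i) - inner (dG (?p i) (\<sigma> i)) (?q i - ?p i) \<le> \<beta> * ?B (?q i) (?p i)"
        using assmA[OF i sgm[OF i] mem[OF i] mem[OF i]] by simp
      show "0 \<le> \<gamma> * ?B (?q i) (\<pi>s i)"
        using bnn[OF i mem[OF i] smem[OF i]] gamma_pos by simp
    qed
    have Ssum: "?S \<le> ?M0 + (c / 2 * ?Gg + 1 / (2 * c) * ?Qp) - \<mu> * \<gamma> * ?D + \<mu> * \<beta> * ?E + ?F0"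
    proof -
      have "?S \<le> (\<Sum>i<N. inner (gv i ?p - gv i \<pi>s) (?p i - \<pi>s i)
        + (c / 2 * (norm (gv i ?p - gv i \<pi>s))\<^sup>2 + 1 / (2 * c) * (norm (?q i - ?p i))\<^sup>2)
        - \<mu> * \<gamma> * ?B (\<pi>s i) (?p i) + \<mu> * \<beta> * ?B (?q i) (?p i)
        + inner (gv i \<pi>s - \<mu> *\<^sub>R dG (\<pi>s i) (\<sigma> i)) (?q i - \<pi>s i))"
        by (rule sum_mono) (use per in auto)
      also have "\<dots> = ?M0 + (c / 2 * ?Gg + 1 / (2 * c) * ?Qp) - \<mu> * \<gamma> * ?D + \<mu> * \<beta> * ?E + ?F0"
        unfolding bregman_prof_def
        by (simp add: sum.distrib sum_subtractf sum_distrib_left)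
      finally show ?thesis .
    qed
    have M0: "?M0 \<le> 0" using monotone[OF seq pis] .
    have F0: "?F0 \<le> 0" by (rule sum_nonpos) (use foc mem in auto)
    have Gg: "?Gg \<le> L\<^sup>2 * ?P" using smooth[OF seq pis] .
    have P: "?P \<le> 2 / \<rho> * ?D"
    proof -
      have "?P \<le> (\<Sum>i<N. 2 / \<rho> * ?B (\<pi>s i) (?p i))"
      proof (rule sum_mono)
        fix i assume "i \<in> {..<N}"
        then have i: "i < N" by simp
        have "\<rho> / 2 * (norm (\<pi>s i - ?p i))\<^sup>2 \<le> ?B (\<pi>s i) (?p i)" by (rule blb[OF i smem[OF i] mem[OF i]])
        then show "(norm (?p i - \<pi>s i))\<^sup>2 \<le> 2 / \<rho> * ?B (\<pi>s i) (?p i)"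
          using rho_pos by (simp add: norm_minus_commute field_simps)
      qed
      then show ?thesis unfolding bregman_prof_def by (simp add: sum_distrib_left)
    qed
    have Qp: "?Qp \<le> 2 / \<rho> * ?E"
    proof -
      have "?Qp \<le> (\<Sum>i<N. 2 / \<rho> * ?B (?q i) (?p i))"
      proof (rule sum_mono)
        fix i assume "i \<in> {..<N}"
        then have i: "i < N" by simp
        have "\<rho> / 2 * (norm (?q i - ?p i))\<^sup>2 \<le> ?B (?q i) (?p i)" by (rule blb[OF i mem[OF i] mem[OF i]])
        then show "(norm (?q i - ?p i))\<^sup>2 \<le> 2 / \<rho> * ?B (?q i) (?p i)"
          using rho_pos by (simp add: field_simps)
      qed
      then show ?thesis unfolding bregman_prof_def by (simp add: sum_distrib_left)
    qed
    have Dnn: "?D \<ge> 0" unfolding bregman_prof_def by (rule sum_nonneg) (use bnn smem mem in auto)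
    have Enn: "?E \<ge> 0" unfolding bregman_prof_def by (rule sum_nonneg) (use bnn mem in auto)
    have t1: "c / 2 * ?Gg \<le> \<mu> * \<gamma> / 2 * ?D"
    proof -
      have "c / 2 * ?Gg \<le> c / 2 * (L\<^sup>2 * (2 / \<rho> * ?D))"
      proof (rule mult_left_mono)
        have "L\<^sup>2 * ?P \<le> L\<^sup>2 * (2 / \<rho> * ?D)" by (rule mult_left_mono[OF P]) simp
        then show "?Gg \<le> L\<^sup>2 * (2 / \<rho> * ?D)" using Gg by linarith
      qed (use cpos in simp)
      also have "\<dots> = (c * L\<^sup>2 / \<rho>) * ?D" by simp
      also have "\<dots> \<le> \<mu> * \<gamma> / 2 * ?D" using cK Dnn by (rule mult_right_mono)
      finally show ?thesis .
    qed
    have t2: "1 / (2 * c) * ?Qp \<le> 1 / (c * \<rho>) * ?E"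
    proof -
      have "1 / (2 * c) * ?Qp \<le> 1 / (2 * c) * (2 / \<rho> * ?E)"
        using Qp cpos by (intro mult_left_mono) auto
      then show ?thesis by simp
    qed
    have S2: "?S \<le> - (\<mu> * \<gamma> / 2) * ?D + (1 / (c * \<rho>) + \<mu> * \<beta>) * ?E"
      using Ssum M0 F0 t1 t2 by (simp add: algebra_simps)
    have "\<eta> * ?S \<le> \<eta> * (- (\<mu> * \<gamma> / 2) * ?D + (1 / (c * \<rho>) + \<mu> * \<beta>) * ?E)"
      using S2 eta_pos by (simp add: mult_left_mono)
    also have "\<dots> = - (\<eta> * \<mu> * \<gamma> / 2) * ?D + (\<eta> * (1 / (c * \<rho>) + \<mu> * \<beta>)) * ?E"
      by (simp add: algebra_simps)
    also have "\<dots> \<le> - (\<eta> * \<mu> * \<gamma> / 2) * ?D + 1 * ?E"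
      using mult_right_mono[OF cM Enn] by simp
    finally have "\<eta> * ?S \<le> - (\<eta> * \<mu> * \<gamma> / 2) * ?D + ?E" by simp
    with step[of t] show ?thesis unfolding r_def by (simp add: algebra_simps)
  qed
  show ?thesis
  proof
    fix t show "?Bp \<pi>s (\<pi> t) \<le> ?Bp \<pi>s (\<pi> 0) * (1 - \<eta> * \<mu> * \<gamma> / 2) ^ t"
    proof (induction t)
      case 0 then show ?case by simp
    next
      case (Suc t)
      have "?Bp \<pi>s (\<pi> (Suc t)) \<le> r * ?Bp \<pi>s (\<pi> t)" by (rule onestep)
      also have "\<dots> \<le> r * (?Bp \<pi>s (\<pi> 0) * r ^ t)" using Suc rnn unfolding r_def by (simp add: mult_left_mono)
      finally show ?case unfolding r_def by (simp add: algebra_simps)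
    qed
  qed
qed

end
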